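(* Let $X$ be a path-connected topological space, $a,b\in X$ with $a\neq b$, $G$ a group, and $p$ a path from $b$ to $a$. For $z\in Z^1(X,b)$, the cohomology class in $H^1(X,\{a,b\})$ of the cocycle $\varepsilon_p(z)\bullet z$ depends only on $p$ and on the cohomology class of $z$ in $H^1(X,b)$.
   Context: Conventions: a path in $W$ is a continuous map $[0,1]\to W$; $P(W)$ is the set of paths; $p\cdot q$ is concatenation; homotopies of paths are relative to $\{0,1\}$. $G$ has unit $1$. For $Y\subset W$: a $0$-cochain of $(W,Y)$ is a map $c\colon W\to G$ with $c|_Y=1$, and these form a group $C^0(W,Y)$ under pointwise multiplication; more generally any map $c\colon W\to G$ acts on maps $u\colon P(W)\to G$ by $(c\bullet u)(p)=c(p(0))u(p)c(p(1))^{-1}$. A $1$-cochain of $(W,Y)$ is $u\colon P(W)\to G$ with $u(p)=1$ for paths with image in $Y$; a cocycle additionally satisfies $u(p)=u(q)$ for homotopic $p,q$ and $u(p\cdot q)=u(p)u(q)$ when defined; $Z^1(W,Y)$ is the set of cocycles and $H^1(W,Y)$ the set of $C^0(W,Y)$-orbits. $(W,b)$ abbreviates $(W,\{b\})$. $G_a\subset C^0(X,b)$ is the subgroup of $0$-cochains equal to $1$ on $X\setminus\{a\}$, identified with $G$ via the value at $a$. For $z\in Z^1(X,b)$, $\varepsilon_p(z)\in G_a$ is the element with value $z(p)$ at $a$. (Since $\{a,b\}$ is discrete, $\varepsilon_p(z)\bullet z\in Z^1(X,\{a,b\})$.) *)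

theory Defs
  imports "HOL-Analysis.Analysis" "HOL-Algebra.Group"
begin

definition Paths :: "'a topology \<Rightarrow> (real \<Rightarrow> 'a) set" where
  "Paths W = {p. pathin W p}"

definition path_homotopic :: "'a topology \<Rightarrow> (real \<Rightarrow> 'a) \<Rightarrow> (real \<Rightarrow> 'a) \<Rightarrow> bool" where
  "path_homotopic W p q \<longleftrightarrow>
     homotopic_with (\<lambda>r. r 0 = p 0 \<and> r 1 = p 1) (top_of_set {0..1}) W p q"

definition concat_path :: "(real \<Rightarrow> 'a) \<Rightarrow> (real \<Rightarrow> 'a) \<Rightarrow> real \<Rightarrow> 'a" where
  "concat_path p q = (\<lambda>t. if t \<le> 1/2 then p (2 * t) else q (2 * t - 1))"

definition cochain0 :: "('g, 'm) monoid_scheme \<Rightarrow> 'a topology \<Rightarrow> 'a set \<Rightarrow> ('a \<Rightarrow> 'g) \<Rightarrow> bool" where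
  "cochain0 G W Y c \<longleftrightarrow> (\<forall>x\<in>topspace W. c x \<in> carrier G) \<and> (\<forall>y\<in>Y. c y = \<one>\<^bsub>G\<^esub>)"

definition act :: "('g, 'm) monoid_scheme \<Rightarrow> ('a \<Rightarrow> 'g) \<Rightarrow> ((real \<Rightarrow> 'a) \<Rightarrow> 'g) \<Rightarrow> (real \<Rightarrow> 'a) \<Rightarrow> 'g" where
  "act G c u = (\<lambda>p. c (p 0) \<otimes>\<^bsub>G\<^esub> u p \<otimes>\<^bsub>G\<^esub> inv\<^bsub>G\<^esub> (c (p 1)))"

text \<open>1-cocycles of (W,Y) (maps on paths; only values on P(W) matter).\<close>
definition cocycle1 :: "('g, 'm) monoid_scheme \<Rightarrow> 'a topology \<Rightarrow> 'a set \<Rightarrow> ((real \<Rightarrow> 'a) \<Rightarrow> 'g) \<Rightarrow> bool" where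
  "cocycle1 G W Y u \<longleftrightarrow>
     (\<forall>p\<in>Paths W. u p \<in> carrier G) \<and>
     (\<forall>p\<in>Paths W. p ` {0..1} \<subseteq> Y \<longrightarrow> u p = \<one>\<^bsub>G\<^esub>) \<and>
     (\<forall>p\<in>Paths W. \<forall>q\<in>Paths W. path_homotopic W p q \<longrightarrow> u p = u q) \<and>
     (\<forall>p\<in>Paths W. \<forall>q\<in>Paths W. p 1 = q 0 \<longrightarrow> u (concat_path p q) = u p \<otimes>\<^bsub>G\<^esub> u q)"

definition cohomologous :: "('g, 'm) monoid_scheme \<Rightarrow> 'a topology \<Rightarrow> 'a set \<Rightarrow> ((real \<Rightarrow> 'a) \<Rightarrow> 'g) \<Rightarrow> ((real \<Rightarrow> 'a) \<Rightarrow> 'g) \<Rightarrow> bool" where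
  "cohomologous G W Y u v \<longleftrightarrow>
     (\<exists>c. cochain0 G W Y c \<and> (\<forall>p\<in>Paths W. v p = act G c u p))"

definition eps :: "('g, 'm) monoid_scheme \<Rightarrow> 'a \<Rightarrow> ((real \<Rightarrow> 'a) \<Rightarrow> 'g) \<Rightarrow> (real \<Rightarrow> 'a) \<Rightarrow> 'a \<Rightarrow> 'g" where
  "eps G a z p = (\<lambda>x. if x = a then z p else \<one>\<^bsub>G\<^esub>)"

end

theory Submission
  imports Defs
begin

lemma pathin_ends:
  assumes "pathin X q" shows "q 0 \<in> topspace X" "q 1 \<in> topspace X"
  using assms unfolding pathin_def continuous_map_def by auto

theorem lemma6p1:
  fixes X :: "'a topology" and G :: "('g, 'm) monoid_scheme"
    and a b :: 'a and p :: "real \<Rightarrow> 'a" and z z' :: "(real \<Rightarrow> 'a) \<Rightarrow> 'g"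
  assumes "path_connected_space X"
    and "a \<in> topspace X" and "b \<in> topspace X" and "a \<noteq> b"
    and "group G"
    and "pathin X p" and "p 0 = b" and "p 1 = a"
    and "cocycle1 G X {b} z" and "cocycle1 G X {b} z'"
    and "cohomologous G X {b} z z'"
  shows "cohomologous G X {a, b} (act G (eps G a z p) z) (act G (eps G a z' p) z')"
proof -
  interpret group G by fact
  obtain c where c: "cochain0 G X {b} c" and cz: "\<forall>q\<in>Paths X. z' q = act G c z q"
    using assms(11) unfolding cohomologous_def by blast
  have cc: "\<And>x. x \<in> topspace X \<Longrightarrow> c x \<in> carrier G" and cb: "c b = \<one>\<^bsub>G\<^esub>"
    using c unfolding cochain0_def by auto
  have zc: "\<And>q. q \<in> Paths X \<Longrightarrow> z q \<in> carrier G"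
    using assms(9) unfolding cocycle1_def by auto
  have pP: "p \<in> Paths X" using assms(6) by (simp add: Paths_def)
  have zp: "z p \<in> carrier G" using zc pP by auto
  have ca: "c a \<in> carrier G" using cc assms(2) by auto
  have z'p: "z' p = z p \<otimes>\<^bsub>G\<^esub> inv\<^bsub>G\<^esub> (c a)"
    using cz pP cb assms(7,8) zp ca by (simp add: act_def)
  define d where "d = (\<lambda>x. if x = a then \<one>\<^bsub>G\<^esub> else c x)"
  have dc: "\<And>x. x \<in> topspace X \<Longrightarrow> d x \<in> carrier G" using cc by (simp add: d_def)
  have ec: "\<And>x. eps G a z p x \<in> carrier G" using zp by (simp add: eps_def)
  have key: "\<And>x. x \<in> topspace X \<Longrightarrow> eps G a z' p x \<otimes>\<^bsub>G\<^esub> c x = d x \<otimes>\<^bsub>G\<^esub> eps G a z p x"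
  proof -
    fix x assume x: "x \<in> topspace X"
    show "eps G a z' p x \<otimes>\<^bsub>G\<^esub> c x = d x \<otimes>\<^bsub>G\<^esub> eps G a z p x"
    proof (cases "x = a")
      case True
      then show ?thesis using z'p zp ca by (simp add: eps_def d_def m_assoc)
    next
      case False
      then show ?thesis using cc[OF x] by (simp add: eps_def d_def)
    qed
  qed
  have "cochain0 G X {a, b} d"
    unfolding cochain0_def using dc cb assms(4) by (auto simp: d_def)
  moreover have "\<forall>q\<in>Paths X. act G (eps G a z' p) z' q = act G d (act G (eps G a z p) z) q"
  proof
    fix q assume q: "q \<in> Paths X"
    have q0: "q 0 \<in> topspace X" and q1: "q 1 \<in> topspace X"
      using q pathin_ends by (auto simp: Paths_def)
    have e'c: "\<And>x. eps G a z' p x \<in> carrier G"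
      using z'p zp ca by (simp add: eps_def)
    have zq: "z q \<in> carrier G" using zc q by auto
    let ?e' = "eps G a z' p" and ?e = "eps G a z p"
    have "act G ?e' z' q = ?e' (q 0) \<otimes>\<^bsub>G\<^esub> (c (q 0) \<otimes>\<^bsub>G\<^esub> z q \<otimes>\<^bsub>G\<^esub> inv\<^bsub>G\<^esub> (c (q 1))) \<otimes>\<^bsub>G\<^esub> inv\<^bsub>G\<^esub> (?e' (q 1))"
      using cz q by (simp add: act_def)
    also have "\<dots> = (?e' (q 0) \<otimes>\<^bsub>G\<^esub> c (q 0)) \<otimes>\<^bsub>G\<^esub> z q \<otimes>\<^bsub>G\<^esub> inv\<^bsub>G\<^esub> (?e' (q 1) \<otimes>\<^bsub>G\<^esub> c (q 1))"
      using e'c cc[OF q0] cc[OF q1] zq by (simp add: m_assoc inv_mult_group)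
    also have "\<dots> = (d (q 0) \<otimes>\<^bsub>G\<^esub> ?e (q 0)) \<otimes>\<^bsub>G\<^esub> z q \<otimes>\<^bsub>G\<^esub> inv\<^bsub>G\<^esub> (d (q 1) \<otimes>\<^bsub>G\<^esub> ?e (q 1))"
      using key q0 q1 by simp
    also have "\<dots> = act G d (act G ?e z) q"
      using dc[OF q0] dc[OF q1] ec zq by (simp add: act_def m_assoc inv_mult_group)
    finally show "act G ?e' z' q = act G d (act G ?e z) q" .
  qed
  ultimately show ?thesis unfolding cohomologous_def by blast
qed

end
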